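(* Let $g:\mathbb R\to\mathbb R$ be continuous. Let $\tilde W\in C^2(\mathbb R)$ be nonnegative with $\tilde W(x)=0$ if and only if $x\in\{0,1\}$. For $\varepsilon>0$ define $f_\varepsilon,f_0:\mathcal V\to\mathbb R\cup\{+\infty\}$ by $$f_\varepsilon(u)=\sum_{i\in V}g\big((\Delta u)_i\big)+\frac1\varepsilon\sum_{i\in V}\tilde W(u_i),$$ $$f_0(u)=\begin{cases}\sum_{i\in V}g\big((\kappa^{1,r}_S)_i\big)&\text{if }u=\chi_S\text{ for some }S\subset V,\\+\infty&\text{otherwise.}\end{cases}$$ Then $f_\varepsilon$ $\Gamma$-converges to $f_0$ as $\varepsilon\to0$, with respect to the Euclidean topology on $\mathcal V\cong\mathbb R^n$. That is, for every sequence $\varepsilon_k\to0^+$ the following two conditions hold. First, for every $u\in\mathcal V$ and every sequence $u_k\to u$, $\liminf_k f_{\varepsilon_k}(u_k)\ge f_0(u)$. Second, for every $u\in\mathcal V$ there is a sequence $u_k\to u$ with $\limsup_kf_{\varepsilon_k}(u_k)\le f_0(u)$.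
   Context: $G=(V,E)$ is a finite undirected weighted graph with vertex set $V=\{1,\dots,n\}$. The weights satisfy $\omega_{ij}=\omega_{ji}\ge0$, with $\omega_{ij}>0$ iff $\{i,j\}\in E$, and $\omega_{ii}=0$. The degrees are $d_i=\sum_j\omega_{ij}>0$. Parameters $r\in[0,1]$ and $q\in[1/2,1]$ are fixed. $\mathcal V$ is the space of functions $V\to\mathbb R$, and $\chi_S$ is the indicator of $S\subset V$. The graph Laplacian is $(\Delta u)_i=d_i^{-r}\sum_j\omega_{ij}(u_i-u_j)$. The graph curvature of $S\subset V$ is the function $\kappa^{q,r}_S\in\mathcal V$ given by $(\kappa^{q,r}_S)_i=d_i^{-r}\sum_{j\in V\setminus S}\omega_{ij}^q$ if $i\in S$, and $(\kappa^{q,r}_S)_i=-d_i^{-r}\sum_{j\in S}\omega_{ij}^q$ if $i\notin S$. Here $\omega_{ij}^q:=0$ when $\omega_{ij}=0$. *)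

theory Defs
  imports "HOL-Analysis.Analysis"
begin

text \<open>Vertices are the elements of a finite type 'n (so V = UNIV, n = CARD('n));
  functions V \<rightarrow> R are vectors real^'n with the Euclidean topology.\<close>

definition degree :: "('n::finite \<Rightarrow> 'n \<Rightarrow> real) \<Rightarrow> 'n \<Rightarrow> real" where
  "degree w i = (\<Sum>j\<in>UNIV. w i j)"

definition graph_laplacian ::
  "real \<Rightarrow> ('n::finite \<Rightarrow> 'n \<Rightarrow> real) \<Rightarrow> real^'n \<Rightarrow> real^'n" where
  "graph_laplacian r w u = (\<chi> i. degree w i powr (- r) * (\<Sum>j\<in>UNIV. w i j * (u $ i - u $ j)))"

definition wpow :: "real \<Rightarrow> real \<Rightarrow> real" where
  "wpow q x = (if x = 0 then 0 else x powr q)"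

definition graph_curvature ::
  "real \<Rightarrow> real \<Rightarrow> ('n::finite \<Rightarrow> 'n \<Rightarrow> real) \<Rightarrow> 'n set \<Rightarrow> real^'n" where
  "graph_curvature q r w S = (\<chi> i.
     if i \<in> S then degree w i powr (- r) * (\<Sum>j\<in>UNIV - S. wpow q (w i j))
     else - (degree w i powr (- r) * (\<Sum>j\<in>S. wpow q (w i j))))"

definition indicator_vec :: "'n::finite set \<Rightarrow> real^'n" where
  "indicator_vec S = (\<chi> i. if i \<in> S then 1 else 0)"

definition f_eps ::
  "(real \<Rightarrow> real) \<Rightarrow> (real \<Rightarrow> real) \<Rightarrow> real \<Rightarrow> ('n::finite \<Rightarrow> 'n \<Rightarrow> real) \<Rightarrow> real \<Rightarrow> real^'n \<Rightarrow> ereal" where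
  "f_eps g W r w \<epsilon> u = ereal ((\<Sum>i\<in>UNIV. g (graph_laplacian r w u $ i))
                                 + (1 / \<epsilon>) * (\<Sum>i\<in>UNIV. W (u $ i)))"

definition f_zero ::
  "(real \<Rightarrow> real) \<Rightarrow> real \<Rightarrow> ('n::finite \<Rightarrow> 'n \<Rightarrow> real) \<Rightarrow> real^'n \<Rightarrow> ereal" where
  "f_zero g r w u = (if \<exists>S. u = indicator_vec S
       then ereal (\<Sum>i\<in>UNIV. g (graph_curvature 1 r w (THE S. u = indicator_vec S) $ i))
       else \<infinity>)"

end

theory Submission
  imports Defs
begin

lemma ind_inj: "indicator_vec S = indicator_vec T \<Longrightarrow> S = T"
proof -
  assume h: "indicator_vec S = indicator_vec T"
  show "S = T"
  proof (rule set_eqI)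
    fix x
    have "indicator_vec S $ x = indicator_vec T $ x" using h by simp
    thus "x \<in> S \<longleftrightarrow> x \<in> T" by (simp add: indicator_vec_def split: if_splits)
  qed
qed

lemma lap_ind:
  assumes nn: "\<And>i j. w i j \<ge> 0"
  shows "graph_laplacian r w (indicator_vec S) = graph_curvature 1 r w S"
proof -
  have wp: "wpow 1 (w i j) = w i j" for i j
    using nn[of i j] by (auto simp: wpow_def)
  have A: "(\<Sum>j\<in>UNIV. w i j * (1 - (if j \<in> S then 1 else 0))) = (\<Sum>j\<in>UNIV - S. w i j)" for i
    by (rule sum.mono_neutral_cong_right) auto
  have B: "(\<Sum>j\<in>UNIV. - (w i j * (if j \<in> S then 1 else 0))) = - (\<Sum>j\<in>S. w i j)" for i
  proof -
    have "(\<Sum>j\<in>UNIV. - (w i j * (if j \<in> S then 1 else 0))) = - (\<Sum>j\<in>UNIV. (if j \<in> S then w i j else 0))"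
      by (simp add: sum_negf[symmetric] if_distrib cong: if_cong)
    also have "(\<Sum>j\<in>UNIV. (if j \<in> S then w i j else 0)) = (\<Sum>j\<in>S. w i j)"
      by (simp add: sum.If_cases)
    finally show ?thesis .
  qed
  show ?thesis
    unfolding graph_laplacian_def graph_curvature_def indicator_vec_def
    by (rule vec_eq_iff[THEN iffD2]) (auto simp: wp A B)
qed

lemma lap_tendsto:
  assumes "us \<longlonglongrightarrow> u"
  shows "(\<lambda>k. graph_laplacian r w (us k) $ i) \<longlonglongrightarrow> graph_laplacian r w u $ i"
  unfolding graph_laplacian_def vec_lambda_beta
  by (intro tendsto_intros tendsto_vec_nth assms)

theorem mainTheorem4:
  fixes w :: "'n::finite \<Rightarrow> 'n \<Rightarrow> real"
    and r q :: real
    and g W :: "real \<Rightarrow> real"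
  assumes w_sym: "\<And>i j. w i j = w j i"
    and w_nonneg: "\<And>i j. w i j \<ge> 0"
    and w_diag: "\<And>i. w i i = 0"
    and deg_pos: "\<And>i. degree w i > 0"
    and r_range: "0 \<le> r" "r \<le> 1"
    and q_range: "1/2 \<le> q" "q \<le> 1"
    and g_cont: "continuous_on UNIV g"
    and W_C2: "\<exists>W' W''. (\<forall>x. (W has_real_derivative W' x) (at x))
                      \<and> (\<forall>x. (W' has_real_derivative W'' x) (at x))
                      \<and> continuous_on UNIV W''"
    and W_nonneg: "\<And>x. W x \<ge> 0"
    and W_zero: "\<And>x. W x = 0 \<longleftrightarrow> x = 0 \<or> x = 1"
  shows "\<forall>\<epsilon> :: nat \<Rightarrow> real. (\<forall>k. \<epsilon> k > 0) \<and> \<epsilon> \<longlonglongrightarrow> 0 \<longrightarrow>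
     (\<forall>u (us :: nat \<Rightarrow> real^'n). us \<longlonglongrightarrow> u \<longrightarrow>
          f_zero g r w u \<le> Liminf sequentially (\<lambda>k. f_eps g W r w (\<epsilon> k) (us k)))
   \<and> (\<forall>u :: real^'n. \<exists>us. us \<longlonglongrightarrow> u \<and>
          Limsup sequentially (\<lambda>k. f_eps g W r w (\<epsilon> k) (us k)) \<le> f_zero g r w u)"
proof (intro allI impI conjI)
  fix \<epsilon> :: "nat \<Rightarrow> real"
  assume eps: "(\<forall>k. \<epsilon> k > 0) \<and> \<epsilon> \<longlonglongrightarrow> 0"
  have gc: "isCont g x" for x using g_cont by (simp add: continuous_on_eq_continuous_at)
  obtain W' where W': "\<And>x. (W has_real_derivative W' x) (at x)" using W_C2 by blast
  have Wc: "isCont W x" for x using W'[of x] by (rule DERIV_isCont)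
  have fz_ind: "f_zero g r w (indicator_vec S) = ereal (\<Sum>i\<in>UNIV. g (graph_laplacian r w (indicator_vec S) $ i))" for S
  proof -
    have "(THE T. indicator_vec S = indicator_vec T) = S"
      by (rule the_equality) (auto dest: ind_inj)
    thus ?thesis unfolding f_zero_def using lap_ind[OF w_nonneg, where r=r and S=S] by auto
  qed
  {
    fix u and us :: "nat \<Rightarrow> real^'n"
    assume us: "us \<longlonglongrightarrow> u"
    define G where "G k = (\<Sum>i\<in>UNIV. g (graph_laplacian r w (us k) $ i))" for k
    define G0 where "G0 = (\<Sum>i\<in>UNIV. g (graph_laplacian r w u $ i))"
    have GT: "G \<longlonglongrightarrow> G0" unfolding G_def G0_def
      by (intro tendsto_sum isCont_tendsto_compose[OF gc] lap_tendsto us)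
    show "f_zero g r w u \<le> Liminf sequentially (\<lambda>k. f_eps g W r w (\<epsilon> k) (us k))"
    proof (cases "\<exists>S. u = indicator_vec S")
      case True
      then obtain S where S: "u = indicator_vec S" by blast
      have "Liminf sequentially (\<lambda>k. ereal (G k)) \<le> Liminf sequentially (\<lambda>k. f_eps g W r w (\<epsilon> k) (us k))"
      proof (rule Liminf_mono, rule always_eventually, rule allI)
        fix k
        have "0 \<le> (1 / \<epsilon> k) * (\<Sum>i\<in>UNIV. W (us k $ i))"
          using eps W_nonneg by (intro mult_nonneg_nonneg sum_nonneg) (auto simp: less_imp_le)
        thus "ereal (G k) \<le> f_eps g W r w (\<epsilon> k) (us k)"
          unfolding f_eps_def G_def by simp
      qed
      moreover have "Liminf sequentially (\<lambda>k. ereal (G k)) = ereal G0"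
        by (rule lim_imp_Liminf) (auto intro: GT)
      ultimately show ?thesis using fz_ind[of S] S G0_def by simp
    next
      case False
      have "\<exists>i. u $ i \<noteq> 0 \<and> u $ i \<noteq> 1"
      proof (rule ccontr)
        assume "\<not> ?thesis"
        hence "u = indicator_vec {i. u $ i = 1}"
          by (auto simp: indicator_vec_def vec_eq_iff)
        thus False using False by blast
      qed
      then obtain i where i: "u $ i \<noteq> 0" "u $ i \<noteq> 1" by blast
      define c where "c = (\<Sum>j\<in>UNIV. W (u $ j))"
      have "W (u $ i) > 0" using W_nonneg[of "u $ i"] W_zero[of "u $ i"] i by auto
      moreover have "W (u $ i) \<le> c" unfolding c_def
        by (rule member_le_sum) (auto intro: W_nonneg)
      ultimately have cpos: "c > 0" by simp
      have ST: "(\<lambda>k. \<Sum>j\<in>UNIV. W (us k $ j)) \<longlonglongrightarrow> c" unfolding c_def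
        by (intro tendsto_sum isCont_tendsto_compose[OF Wc] tendsto_vec_nth us)
      have inv: "filterlim (\<lambda>k. inverse (\<epsilon> k)) at_top sequentially"
        by (rule filterlim_inverse_at_top) (use eps in auto)
      have "filterlim (\<lambda>k. (\<Sum>j\<in>UNIV. W (us k $ j)) * inverse (\<epsilon> k)) at_top sequentially"
        by (rule filterlim_tendsto_pos_mult_at_top[OF ST cpos inv])
      hence "filterlim (\<lambda>k. G k + (\<Sum>j\<in>UNIV. W (us k $ j)) * inverse (\<epsilon> k)) at_top sequentially"
        by (rule filterlim_tendsto_add_at_top[OF GT])
      hence lim: "filterlim (\<lambda>k. G k + (1 / \<epsilon> k) * (\<Sum>j\<in>UNIV. W (us k $ j))) at_top sequentially"
        by (simp add: divide_inverse mult.commute)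
      have "(\<lambda>k. f_eps g W r w (\<epsilon> k) (us k)) \<longlonglongrightarrow> \<infinity>"
        unfolding tendsto_PInfty f_eps_def G_def[symmetric]
        using lim unfolding filterlim_at_top_dense by simp
      hence "Liminf sequentially (\<lambda>k. f_eps g W r w (\<epsilon> k) (us k)) = \<infinity>"
        by (rule lim_imp_Liminf[rotated]) simp
      thus ?thesis by simp
    qed
  }
  {
    fix u :: "real^'n"
    show "\<exists>us. us \<longlonglongrightarrow> u \<and> Limsup sequentially (\<lambda>k. f_eps g W r w (\<epsilon> k) (us k)) \<le> f_zero g r w u"
    proof (intro exI[of _ "\<lambda>k. u"] conjI tendsto_const)
      show "Limsup sequentially (\<lambda>k. f_eps g W r w (\<epsilon> k) u) \<le> f_zero g r w u"
      proof (cases "\<exists>S. u = indicator_vec S")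
        case True
        then obtain S where S: "u = indicator_vec S" by blast
        have "W (u $ i) = 0" for i using W_zero S by (auto simp: indicator_vec_def)
        hence "f_eps g W r w (\<epsilon> k) u = f_zero g r w u" for k
          using fz_ind[of S] S by (simp add: f_eps_def)
        thus ?thesis by (simp add: Limsup_const)
      next
        case False
        thus ?thesis by (simp add: f_zero_def)
      qed
    qed
  }
qed

end
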